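(* Let $E$ be a finite set and let $f:\mathbb{Z}_+^E\to\mathbb{R}_{\ge 0}$ be a non-negative lattice submodular function. Then for every $\mathbf{s}\in\mathbb{Z}_+^E$ and every $\mathbf{x},\mathbf{y}\in\mathbb{Z}_+^E$ with $\mathbf{x}\wedge\mathbf{y}=\mathbf{0}$, $$f(\mathbf{s})\le f(\mathbf{s}\vee\mathbf{x})+f(\mathbf{s}\vee\mathbf{y}).$$
   Context: For $\mathbf{x},\mathbf{y}\in\mathbb{Z}_+^E$, $\mathbf{x}\wedge\mathbf{y}$ and $\mathbf{x}\vee\mathbf{y}$ denote the coordinatewise minimum and maximum, respectively. A function $f:\mathbb{Z}_+^E\to\mathbb{R}$ is lattice submodular if $f(\mathbf{x})+f(\mathbf{y})\ge f(\mathbf{x}\vee\mathbf{y})+f(\mathbf{x}\wedge\mathbf{y})$ for all $\mathbf{x},\mathbf{y}\in\mathbb{Z}_+^E$. *)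

theory Defs
  imports Complex_Main
begin

text \<open>Vectors in Z_+^E are functions E => nat, E a finite type.
  Coordinatewise min/max are inf/sup of the pointwise lattice.\<close>

definition lattice_submodular :: "(('e \<Rightarrow> nat) \<Rightarrow> real) \<Rightarrow> bool" where
  "lattice_submodular f \<longleftrightarrow>
     (\<forall>x y. f x + f y \<ge> f (sup x y) + f (inf x y))"

end

theory Submission
  imports Defs
begin

theorem lemma1:
  fixes f :: "('e::finite \<Rightarrow> nat) \<Rightarrow> real"
  assumes nonneg: "\<And>z. f z \<ge> 0"
    and submod: "lattice_submodular f"
    and disj: "inf x y = (\<lambda>_. 0)"
  shows "f s \<le> f (sup s x) + f (sup s y)"
proof -
  have e: "inf (sup s x) (sup s y) = s"
  proof
    fix i
    have "min (x i) (y i) = 0" using fun_cong[OF disj, of i] by (simp add: inf_nat_def)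
    then show "inf (sup s x) (sup s y) i = s i" by (auto simp: max_def min_def inf_nat_def sup_nat_def)
  qed
  have "f (sup s x) + f (sup s y) \<ge> f (sup (sup s x) (sup s y)) + f (inf (sup s x) (sup s y))"
    using submod unfolding lattice_submodular_def by blast
  then show ?thesis using e nonneg[of "sup (sup s x) (sup s y)"] by simp
qed

end
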